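(* Let $d\ge1$ and let $T>0$ (finite), $D\in\{1,\dots,d\}$ and $C>0$ be random variables. Set $\tilde T=T\wedge C$ and $\tilde D=D\,\mathbf 1\{T\le C\}$. Then for all $t\in\mathcal J$: $$B(t)=P(\tilde T<t\mid T\ge t)+\frac{1}{S(t-)}\sum_{j=1}^d\int_{(0,t)}\big(1-a_j(s)-B(s)\big)F_j(ds)$$ and $$\sum_{j=1}^d\int_{(0,t]}\frac{1}{K(u-)}\tilde F_j(du)=P(T\le t\mid C\ge t)+\frac{1}{K(t-)}\int_{(0,t)}\Big(1-P(\tilde T=s,\tilde D=0\mid C=s)-\sum_{j=1}^d\int_{(0,s]}\frac{1}{K(u-)}\tilde F_j(du)\Big)G(ds).$$
   Context: Functions of the event time: - $S(t)=P(T>t)$. - $F_j(t)=P(T\le t,D=j)$. Censoring-time quantities: - $K(t)=P(C>t)$ and $G(t)=P(C\le t)$. Observed quantities: - $\tilde S(t)=P(\tilde T>t)$. - $\tilde F_j(t)=P(\tilde T\le t,\tilde D=j)$ for $j=0,\dots,d$. - $B(t)=\int_{(0,t)}S(s)^{-1}\tilde F_0(ds)$. - $\mathcal J=\{t\ge0:\tilde S(t)>0\}$. The function $a_j(t)=P(\tilde T=t,\tilde D=j\mid T=t,D=j)$ is a measurable function, unique up to $F_j$-null sets, with $P(\tilde T=T,D=j,T\in A)=\int_A a_j\,dF_j$ for all Borel sets $A$. $P(\cdot\mid C=s)$ is a regular conditional probability given $C$. *)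

theory Defs
  imports "HOL-Probability.Probability"
begin

definition leftlim :: "(real \<Rightarrow> real) \<Rightarrow> real \<Rightarrow> real" where
  "leftlim f t = Lim (at_left t) f"

definition subdistr :: "'a measure \<Rightarrow> ('a \<Rightarrow> real) \<Rightarrow> ('a \<Rightarrow> bool) \<Rightarrow> real measure" where
  "subdistr M X P = distr (restrict_space M {\<omega>\<in>space M. P \<omega>}) borel X"

definition Ttil :: "('a \<Rightarrow> real) \<Rightarrow> ('a \<Rightarrow> real) \<Rightarrow> 'a \<Rightarrow> real" where
  "Ttil T C = (\<lambda>\<omega>. min (T \<omega>) (C \<omega>))"

definition Dtil :: "('a \<Rightarrow> real) \<Rightarrow> ('a \<Rightarrow> real) \<Rightarrow> ('a \<Rightarrow> nat) \<Rightarrow> 'a \<Rightarrow> nat" where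
  "Dtil T C D = (\<lambda>\<omega>. if T \<omega> \<le> C \<omega> then D \<omega> else 0)"

definition Sfun :: "'a measure \<Rightarrow> ('a \<Rightarrow> real) \<Rightarrow> real \<Rightarrow> real" where
  "Sfun M T t = \<P>(\<omega> in M. T \<omega> > t)"

definition Kfun :: "'a measure \<Rightarrow> ('a \<Rightarrow> real) \<Rightarrow> real \<Rightarrow> real" where
  "Kfun M C t = \<P>(\<omega> in M. C \<omega> > t)"

definition Fmeas :: "'a measure \<Rightarrow> ('a \<Rightarrow> real) \<Rightarrow> ('a \<Rightarrow> nat) \<Rightarrow> nat \<Rightarrow> real measure" where
  "Fmeas M T D j = subdistr M T (\<lambda>\<omega>. D \<omega> = j)"

definition Ftilmeas :: "'a measure \<Rightarrow> ('a \<Rightarrow> real) \<Rightarrow> ('a \<Rightarrow> real) \<Rightarrow> ('a \<Rightarrow> nat) \<Rightarrow> nat \<Rightarrow> real measure" where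
  "Ftilmeas M T C D j = subdistr M (Ttil T C) (\<lambda>\<omega>. Dtil T C D \<omega> = j)"

definition Gmeas :: "'a measure \<Rightarrow> ('a \<Rightarrow> real) \<Rightarrow> real measure" where
  "Gmeas M C = distr M borel C"

definition Bfun :: "'a measure \<Rightarrow> ('a \<Rightarrow> real) \<Rightarrow> ('a \<Rightarrow> real) \<Rightarrow> ('a \<Rightarrow> nat) \<Rightarrow> real \<Rightarrow> real" where
  "Bfun M T C D t = (LINT s:{0<..<t}|Ftilmeas M T C D 0. 1 / Sfun M T s)"

definition Jset :: "'a measure \<Rightarrow> ('a \<Rightarrow> real) \<Rightarrow> ('a \<Rightarrow> real) \<Rightarrow> real set" where
  "Jset M T C = {t. t \<ge> 0 \<and> \<P>(\<omega> in M. Ttil T C \<omega> > t) > 0}"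

definition is_a_fun :: "'a measure \<Rightarrow> ('a \<Rightarrow> real) \<Rightarrow> ('a \<Rightarrow> real) \<Rightarrow> ('a \<Rightarrow> nat) \<Rightarrow> nat \<Rightarrow> (real \<Rightarrow> real) \<Rightarrow> bool" where
  "is_a_fun M T C D j a \<longleftrightarrow> a \<in> borel_measurable borel \<and> integrable (Fmeas M T D j) a \<and>
     (\<forall>A\<in>sets borel. \<P>(\<omega> in M. Ttil T C \<omega> = T \<omega> \<and> D \<omega> = j \<and> T \<omega> \<in> A)
                       = (LINT s:A|Fmeas M T D j. a s))"

text \<open>Regular conditional probability P(\<cdot> | C = s), given as a family of probability measures
  on the sets of M, measurable in s, disintegrating P along C.\<close>
definition is_rcp :: "'a measure \<Rightarrow> ('a \<Rightarrow> real) \<Rightarrow> (real \<Rightarrow> 'a measure) \<Rightarrow> bool" where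
  "is_rcp M C \<kappa> \<longleftrightarrow> (\<forall>s. prob_space (\<kappa> s) \<and> sets (\<kappa> s) = sets M) \<and>
     (\<forall>E\<in>sets M. (\<lambda>s. measure (\<kappa> s) E) \<in> borel_measurable borel) \<and>
     (\<forall>E\<in>sets M. \<forall>A\<in>sets borel.
        measure M (E \<inter> (C -` A \<inter> space M)) = (LINT s:A|distr M borel C. measure (\<kappa> s) E))"

end

theory Submission
  imports Defs
begin



lemma leftlim_surv:
  assumes "prob_space M" "X \<in> borel_measurable M"
  shows "leftlim (\<lambda>s. \<P>(\<omega> in M. X \<omega> > s)) t = \<P>(\<omega> in M. X \<omega> \<ge> t)"
proof -
  interpret prob_space M by fact
  have "((\<lambda>s. \<P>(\<omega> in M. X \<omega> > s)) \<longlongrightarrow> \<P>(\<omega> in M. X \<omega> \<ge> t)) (at_left t)"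
  proof (rule tendsto_at_left_sequentially[of "t - 1"])
    fix S :: "nat \<Rightarrow> real" assume S: "\<And>n. S n < t" "incseq S" "S \<longlonglongrightarrow> t"
    have "(\<lambda>n. measure M {\<omega>\<in>space M. X \<omega> > S n}) \<longlonglongrightarrow> measure M (\<Inter>n. {\<omega>\<in>space M. X \<omega> > S n})"
      apply (rule finite_Lim_measure_decseq)
      using assms(2) S(2) by (auto simp: decseq_def incseq_def intro: le_less_trans)
    moreover have "(\<Inter>n. {\<omega>\<in>space M. X \<omega> > S n}) = {\<omega>\<in>space M. X \<omega> \<ge> t}"
    proof safe
      fix \<omega> n assume "\<omega> \<in> space M" "t \<le> X \<omega>" then show "S n < X \<omega>" using S(1)[of n] by linarith
    next
      fix \<omega> assume "\<omega> \<in> (\<Inter>n. {\<omega>\<in>space M. X \<omega> > S n})"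
      then have "\<And>n. S n \<le> X \<omega>" by (fastforce intro: less_imp_le)
      then show "t \<le> X \<omega>" using LIMSEQ_le_const2[OF S(3)] by blast
    qed (insert S, auto)
    ultimately show "(\<lambda>n. \<P>(\<omega> in M. X \<omega> > S n)) \<longlonglongrightarrow> \<P>(\<omega> in M. X \<omega> \<ge> t)" by simp
  qed simp
  then show ?thesis unfolding leftlim_def by (intro tendsto_Lim) auto
qed

lemma subdistr_LINT:
  fixes f :: "real \<Rightarrow> real"
  assumes X: "X \<in> borel_measurable M" and P: "{\<omega>\<in>space M. P \<omega>} \<in> sets M"
    and f: "f \<in> borel_measurable borel" and A: "A \<in> sets borel"
  shows "(LINT s:A|subdistr M X P. f s) = (\<integral>\<omega>. (if P \<omega> \<and> X \<omega> \<in> A then f (X \<omega>) else 0) \<partial>M)"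
proof -
  have Xr: "X \<in> borel_measurable (restrict_space M {\<omega>\<in>space M. P \<omega>})"
    using X by (rule measurable_restrict_space1)
  have m: "(\<lambda>s. indicator A s *\<^sub>R f s) \<in> borel_measurable borel" using f A by measurable
  have "(LINT s:A|subdistr M X P. f s) = integral\<^sup>L (restrict_space M {\<omega>\<in>space M. P \<omega>}) (\<lambda>\<omega>. indicator A (X \<omega>) *\<^sub>R f (X \<omega>))"
    unfolding subdistr_def set_lebesgue_integral_def using integral_distr[OF Xr m] by simp
  also have "\<dots> = (\<integral>\<omega>. indicator {\<omega>\<in>space M. P \<omega>} \<omega> *\<^sub>R (indicator A (X \<omega>) *\<^sub>R f (X \<omega>)) \<partial>M)"
    by (rule integral_restrict_space) (use P in auto)
  also have "\<dots> = (\<integral>\<omega>. (if P \<omega> \<and> X \<omega> \<in> A then f (X \<omega>) else 0) \<partial>M)"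
    by (rule Bochner_Integration.integral_cong) (auto simp: indicator_def)
  finally show ?thesis .
qed



lemma rcp_diag:
  assumes PM: "prob_space M" and R: "is_rcp M C \<kappa>" and Cm: "C \<in> borel_measurable M"
    and G: "\<Gamma> \<in> sets (M \<Otimes>\<^sub>M borel)"
  shows "(\<lambda>s. measure (\<kappa> s) {\<omega>\<in>space M. (\<omega>,s)\<in>\<Gamma>}) \<in> borel_measurable borel"
    and "(\<integral>s. measure (\<kappa> s) {\<omega>\<in>space M. (\<omega>,s)\<in>\<Gamma>} \<partial>(distr M borel C)) = measure M {\<omega>\<in>space M. (\<omega>, C \<omega>) \<in> \<Gamma>}"
proof -
  interpret prob_space M by fact
  have ps: "\<And>s. prob_space (\<kappa> s)" and ss: "\<And>s. sets (\<kappa> s) = sets M"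
    and mm: "\<And>E. E \<in> sets M \<Longrightarrow> (\<lambda>s. measure (\<kappa> s) E) \<in> borel_measurable borel"
    and eqR: "\<And>E A. E \<in> sets M \<Longrightarrow> A \<in> sets borel \<Longrightarrow>
        measure M (E \<inter> (C -` A \<inter> space M)) = (LINT s:A|distr M borel C. measure (\<kappa> s) E)"
    using R unfolding is_rcp_def by blast+
  have sp: "\<And>s. space (\<kappa> s) = space M" using ss by (rule sets_eq_imp_space_eq)
  have k1: "\<And>s. measure (\<kappa> s) (space M) = 1" using ps sp by (metis prob_space.prob_space)
  have emk: "\<And>s E. emeasure (\<kappa> s) E = ennreal (measure (\<kappa> s) E)"
    using ps by (simp add: prob_space_def finite_measure.emeasure_eq_measure)
  have Km: "\<kappa> \<in> measurable borel (subprob_algebra M)"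
  proof (rule measurable_subprob_algebra)
    show "subprob_space (\<kappa> a)" for a using ps by (simp add: prob_space_imp_subprob_space)
    show "sets (\<kappa> a) = sets M" for a by (rule ss)
    show "(\<lambda>a. emeasure (\<kappa> a) A) \<in> borel_measurable borel" if "A \<in> sets M" for A
      unfolding emk using mm[OF that] by measurable
  qed
  define N where "N s = distr (\<kappa> s) (M \<Otimes>\<^sub>M borel) (\<lambda>\<omega>. (\<omega>, s))" for s
  have pm: "(\<lambda>\<omega>. (\<omega>, s)) \<in> measurable (\<kappa> s) (M \<Otimes>\<^sub>M borel)" for s
    unfolding measurable_cong_sets[OF ss refl] by measurable
  have Nm: "N \<in> measurable borel (subprob_algebra (M \<Otimes>\<^sub>M borel))"
    unfolding N_def
    by (rule measurable_distr2[where f="\<lambda>s \<omega>. (\<omega>, s)", OF _ Km]) measurable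
  have emN: "emeasure (N s) X = emeasure (\<kappa> s) {\<omega>\<in>space M. (\<omega>,s)\<in>X}" if "X \<in> sets (M \<Otimes>\<^sub>M borel)" for s X
    unfolding N_def using emeasure_distr[OF pm that] by (simp add: sp Int_def conj_commute)
  define G where "G = distr M borel C"
  have spG: "space G \<noteq> {}" by (simp add: G_def)
  have NmG: "N \<in> measurable G (subprob_algebra (M \<Otimes>\<^sub>M borel))"
    using Nm unfolding G_def by (simp add: measurable_cong_sets[OF sets_distr refl])
  have sN: "sets (N s) = sets (M \<Otimes>\<^sub>M borel)" for s by (simp add: N_def)
  define Q where "Q = G \<bind> N"
  have Qeq: "Q = distr M (M \<Otimes>\<^sub>M borel) (\<lambda>\<omega>. (\<omega>, C \<omega>))"
  proof (rule measure_eqI_generator_eq[OF Int_stable_pair_measure_generator[of M "borel :: real measure"], where \<Omega>="space M \<times> UNIV" and A="\<lambda>_. space M \<times> UNIV"])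
    show "{a \<times> b |a b. a \<in> sets M \<and> b \<in> sets borel} \<subseteq> Pow (space M \<times> UNIV)"
      using sets.sets_into_space by fastforce
    show "sets Q = sigma_sets (space M \<times> UNIV) {a \<times> b |a b. a \<in> sets M \<and> b \<in> sets borel}"
    proof -
      have "sets Q = sets (M \<Otimes>\<^sub>M borel)" unfolding Q_def by (rule sets_bind[OF _ spG]) (simp add: sN)
      then show ?thesis by (simp add: sets_pair_measure)
    qed
    show "sets (distr M (M \<Otimes>\<^sub>M borel) (\<lambda>\<omega>. (\<omega>, C \<omega>))) = sigma_sets (space M \<times> UNIV) {a \<times> b |a b. a \<in> sets M \<and> b \<in> sets borel}"
      by (simp add: sets_pair_measure)
    show "range (\<lambda>_. space M \<times> UNIV) \<subseteq> {a \<times> b |a b. a \<in> sets M \<and> b \<in> sets borel}"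
      by (rule subsetI, rule CollectI, rule exI[of _ "space M"], rule exI[of _ UNIV]) auto
    show "(\<Union>i. space M \<times> UNIV) = space M \<times> UNIV" by simp
    show "emeasure Q (space M \<times> UNIV) \<noteq> \<infinity>" for i::nat
      unfolding Q_def
      by (subst emeasure_bind[OF spG NmG]) (use Cm in \<open>auto simp: emN emk k1 G_def nn_integral_distr emeasure_distr\<close>)
  next
    fix X :: "('a \<times> real) set" assume "X \<in> {a \<times> b |a b. a \<in> sets M \<and> b \<in> sets borel}"
    then obtain E B where X: "X = E \<times> B" and E: "E \<in> sets M" and B: "B \<in> sets borel" by auto
    have EM: "E \<subseteq> space M" using E sets.sets_into_space by auto
    have XS: "X \<in> sets (M \<Otimes>\<^sub>M borel)" using X E B by auto
    have int: "integrable G (\<lambda>s. indicator B s * measure (\<kappa> s) E)"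
      unfolding G_def
      apply (rule finite_measure.integrable_const_bound[where B=1])
      using prob_space_distr[OF Cm] apply (simp add: prob_space_def)
      using prob_space.prob_le_1[OF ps] apply (auto simp: indicator_def)[1]
      using mm[OF E] B by measurable
    have "emeasure Q X = (\<integral>\<^sup>+s. emeasure (N s) X \<partial>G)"
      unfolding Q_def by (rule emeasure_bind[OF spG NmG XS])
    also have "\<dots> = (\<integral>\<^sup>+s. ennreal (indicator B s * measure (\<kappa> s) E) \<partial>G)"
      apply (rule nn_integral_cong)
      apply (subst emN[OF XS])
      using EM by (auto simp: X emk indicator_def intro!: arg_cong[where f="measure (\<kappa> _)"])
    also have "\<dots> = ennreal (\<integral>s. indicator B s * measure (\<kappa> s) E \<partial>G)"
      by (rule nn_integral_eq_integral[OF int]) auto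
    also have "(\<integral>s. indicator B s * measure (\<kappa> s) E \<partial>G) = measure M (E \<inter> (C -` B \<inter> space M))"
      using eqR[OF E B] by (simp add: G_def set_lebesgue_integral_def)
    also have "ennreal \<dots> = emeasure (distr M (M \<Otimes>\<^sub>M borel) (\<lambda>\<omega>. (\<omega>, C \<omega>))) X"
      apply (subst emeasure_distr)
      using Cm XS apply (auto simp: emeasure_eq_measure)[2]
      by (auto simp: X emeasure_eq_measure intro!: arg_cong[where f="measure M"])
    finally show "emeasure Q X = emeasure (distr M (M \<Otimes>\<^sub>M borel) (\<lambda>\<omega>. (\<omega>, C \<omega>))) X" .
  qed
  have emNm: "(\<lambda>s. emeasure (N s) \<Gamma>) \<in> borel_measurable borel"
    using measurable_compose[OF Nm measurable_emeasure_subprob_algebra[OF G]] by simp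
  have fe: "measure (\<kappa> s) {\<omega>\<in>space M. (\<omega>,s)\<in>\<Gamma>} = enn2real (emeasure (N s) \<Gamma>)" for s
    by (simp add: emN[OF G] emk)
  show fm: "(\<lambda>s. measure (\<kappa> s) {\<omega>\<in>space M. (\<omega>,s)\<in>\<Gamma>}) \<in> borel_measurable borel"
    unfolding fe using emNm by measurable
  have int: "integrable G (\<lambda>s. measure (\<kappa> s) {\<omega>\<in>space M. (\<omega>,s)\<in>\<Gamma>})"
      unfolding G_def
      apply (rule finite_measure.integrable_const_bound[where B=1])
      using prob_space_distr[OF Cm] apply (simp add: prob_space_def)
      using prob_space.prob_le_1[OF ps] apply (auto)[1]
      using fm by measurable
  have "ennreal (\<integral>s. measure (\<kappa> s) {\<omega>\<in>space M. (\<omega>,s)\<in>\<Gamma>} \<partial>G) = (\<integral>\<^sup>+s. emeasure (N s) \<Gamma> \<partial>G)"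
    by (subst nn_integral_eq_integral[OF int, symmetric]) (auto simp: emN[OF G] emk)
  also have "\<dots> = emeasure Q \<Gamma>" unfolding Q_def by (rule emeasure_bind[OF spG NmG G, symmetric])
  also have "\<dots> = emeasure M {\<omega>\<in>space M. (\<omega>, C \<omega>) \<in> \<Gamma>}"
    unfolding Qeq using Cm G by (subst emeasure_distr) (auto simp: Int_def conj_commute intro!: arg_cong[where f="emeasure M"])
  finally show "(\<integral>s. measure (\<kappa> s) {\<omega>\<in>space M. (\<omega>,s)\<in>\<Gamma>} \<partial>(distr M borel C)) = measure M {\<omega>\<in>space M. (\<omega>, C \<omega>) \<in> \<Gamma>}"
    unfolding G_def emeasure_eq_measure
    by (subst (asm) ennreal_inj) (auto intro!: integral_nonneg_AE)
qed


lemma intb: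
  fixes f :: "'a \<Rightarrow> real"
  assumes "finite_measure M" "f \<in> borel_measurable M" "\<And>\<omega>. \<omega> \<in> space M \<Longrightarrow> \<bar>f \<omega>\<bar> \<le> c"
  shows "integrable M f"
  by (rule finite_measure.integrable_const_bound[OF assms(1), where B=c]) (use assms in auto)

lemma int_bounds:
  fixes f :: "'a \<Rightarrow> real"
  assumes "prob_space M" "f \<in> borel_measurable M" "\<And>\<omega>. \<omega> \<in> space M \<Longrightarrow> 0 \<le> f \<omega> \<and> f \<omega> \<le> c"
  shows "0 \<le> integral\<^sup>L M f \<and> integral\<^sup>L M f \<le> c"
proof -
  interpret prob_space M by fact
  have i: "integrable M f" by (rule intb[where c=c]) (use assms prob_space_def in \<open>auto\<close>)
  show ?thesis using assms(3) i by (auto intro!: integral_nonneg integral_le_const)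
qed

lemma prob_int:
  assumes "{\<omega>\<in>space M. P \<omega>} \<in> sets M" "finite_measure M"
  shows "measure M {\<omega>\<in>space M. P \<omega>} = (\<integral>\<omega>. (if P \<omega> then 1 else 0) \<partial>M)"
proof -
  have "(\<integral>\<omega>. (if P \<omega> then 1 else 0) \<partial>M) = (\<integral>\<omega>. indicator {\<omega>\<in>space M. P \<omega>} \<omega> \<partial>M)"
    by (rule Bochner_Integration.integral_cong) (auto simp: indicator_def)
  moreover have "{\<omega>\<in>space M. P \<omega>} \<inter> space M = {\<omega>\<in>space M. P \<omega>}" by auto
  moreover have "integral\<^sup>L M (indicator {\<omega>\<in>space M. P \<omega>} :: 'a \<Rightarrow> real) = measure M ({\<omega>\<in>space M. P \<omega>} \<inter> space M)"
    by (rule Bochner_Integration.integral_indicator)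
  ultimately show ?thesis by metis
qed

lemma sumD:
  fixes f :: "nat \<Rightarrow> real"
  assumes "finite I"
  shows "(\<Sum>j\<in>I. if y = j \<and> P then f j else 0) = (if y \<in> I \<and> P then f y else 0)"
  using assms by (cases P) (auto simp: sum.delta)

lemma sumSub:
  fixes f :: "real \<Rightarrow> real" and Y :: "'a \<Rightarrow> nat"
  assumes PM: "prob_space M" and X: "X \<in> borel_measurable M" and Y: "Y \<in> measurable M (count_space UNIV)"
    and f: "f \<in> borel_measurable borel" and A: "A \<in> sets borel" and c: "\<And>s. s \<in> A \<Longrightarrow> \<bar>f s\<bar> \<le> c" and fin: "finite I"
  shows "(\<Sum>j\<in>I. LINT s:A|subdistr M X (\<lambda>\<omega>. Y \<omega> = j). f s)
       = (\<integral>\<omega>. (if Y \<omega> \<in> I \<and> X \<omega> \<in> A then f (X \<omega>) else 0) \<partial>M)"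
proof -
  interpret prob_space M by fact
  have sY: "{\<omega>\<in>space M. Y \<omega> = j} \<in> sets M" for j using Y by measurable
  have "(\<Sum>j\<in>I. LINT s:A|subdistr M X (\<lambda>\<omega>. Y \<omega> = j). f s)
      = (\<Sum>j\<in>I. \<integral>\<omega>. (if Y \<omega> = j \<and> X \<omega> \<in> A then f (X \<omega>) else 0) \<partial>M)"
    by (rule sum.cong[OF refl], rule subdistr_LINT[OF X sY f A])
  also have "\<dots> = (\<integral>\<omega>. (\<Sum>j\<in>I. if Y \<omega> = j \<and> X \<omega> \<in> A then f (X \<omega>) else 0) \<partial>M)"
  proof -
    have "(\<integral>\<omega>. (\<Sum>j\<in>I. if Y \<omega> = j \<and> X \<omega> \<in> A then f (X \<omega>) else 0) \<partial>M) = (\<Sum>j\<in>I. \<integral>\<omega>. (if Y \<omega> = j \<and> X \<omega> \<in> A then f (X \<omega>) else 0) \<partial>M)"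
    proof (rule Bochner_Integration.integral_sum)
    fix j assume "j \<in> I"
    show "integrable M (\<lambda>\<omega>. if Y \<omega> = j \<and> X \<omega> \<in> A then f (X \<omega>) else 0)"
      apply (rule intb[where c="\<bar>c\<bar>"])
      using prob_space_def prob_space_axioms apply blast
      using X Y f A apply measurable
      using c by (force intro: order_trans[OF _ abs_ge_self])
  qed
  then show ?thesis by simp
  qed
  also have "\<dots> = (\<integral>\<omega>. (if Y \<omega> \<in> I \<and> X \<omega> \<in> A then f (X \<omega>) else 0) \<partial>M)"
    by (rule Bochner_Integration.integral_cong[OF refl]) (simp add: sumD[OF fin])
  finally show ?thesis .
qed

lemma distr_LINT:
  fixes f :: "real \<Rightarrow> real"
  assumes X: "X \<in> borel_measurable M" and f: "f \<in> borel_measurable borel" and A: "A \<in> sets borel"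
  shows "(LINT s:A|distr M borel X. f s) = (\<integral>\<omega>. (if X \<omega> \<in> A then f (X \<omega>) else 0) \<partial>M)"
proof -
  have m: "(\<lambda>s. indicator A s *\<^sub>R f s) \<in> borel_measurable borel" using f A by measurable
  show ?thesis unfolding set_lebesgue_integral_def using integral_distr[OF X m]
    by (auto simp: indicator_def if_distrib intro!: Bochner_Integration.integral_cong)
qed

lemma subdistr_finite:
  assumes "finite_measure M" "X \<in> borel_measurable M" "{\<omega>\<in>space M. P \<omega>} \<in> sets M"
  shows "finite_measure (subdistr M X P)"
  unfolding subdistr_def
  apply (rule finite_measure.finite_measure_distr)
   apply (rule finite_measure_restrict_space[OF assms(1,3)])
  by (rule measurable_restrict_space1[OF assms(2)])

lemma antimono_meas:
  fixes f :: "real \<Rightarrow> real"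
  assumes "antimono f" shows "f \<in> borel_measurable borel"
proof -
  have "mono (\<lambda>x. - f x)" using assms by (auto simp: mono_def antimono_def)
  then have "(\<lambda>x. - f x) \<in> borel_measurable borel" by (rule borel_measurable_mono)
  then have "(\<lambda>x. - (- f x)) \<in> borel_measurable borel" by measurable
  then show ?thesis by simp
qed



theorem lemma3:
  fixes M :: "'a measure" and T C :: "'a \<Rightarrow> real" and D :: "'a \<Rightarrow> nat" and d :: nat
    and a :: "nat \<Rightarrow> real \<Rightarrow> real" and \<kappa> :: "real \<Rightarrow> 'a measure"
  assumes "prob_space M"
    and "d \<ge> 1"
    and "T \<in> borel_measurable M" and "C \<in> borel_measurable M"
    and "D \<in> measurable M (count_space UNIV)"
    and "\<And>\<omega>. \<omega> \<in> space M \<Longrightarrow> T \<omega> > 0"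
    and "\<And>\<omega>. \<omega> \<in> space M \<Longrightarrow> C \<omega> > 0"
    and "\<And>\<omega>. \<omega> \<in> space M \<Longrightarrow> D \<omega> \<in> {1..d}"
    and "\<And>j. j \<in> {1..d} \<Longrightarrow> is_a_fun M T C D j (a j)"
    and "is_rcp M C \<kappa>"
    and "t \<in> Jset M T C"
  shows "(Bfun M T C D t =
           \<P>(\<omega> in M. Ttil T C \<omega> < t \<bar> T \<omega> \<ge> t)
           + 1 / leftlim (Sfun M T) t *
             (\<Sum>j=1..d. LINT s:{0<..<t}|Fmeas M T D j. 1 - a j s - Bfun M T C D s))
         \<and> ((\<Sum>j=1..d. LINT u:{0<..t}|Ftilmeas M T C D j. 1 / leftlim (Kfun M C) u) =
           \<P>(\<omega> in M. T \<omega> \<le> t \<bar> C \<omega> \<ge> t)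
           + 1 / leftlim (Kfun M C) t *
             (LINT s:{0<..<t}|Gmeas M C.
                1 - measure (\<kappa> s) {\<omega>\<in>space M. Ttil T C \<omega> = s \<and> Dtil T C D \<omega> = 0}
                  - (\<Sum>j=1..d. LINT u:{0<..s}|Ftilmeas M T C D j. 1 / leftlim (Kfun M C) u)))"
proof -
  interpret prob_space M by fact
  note Tm[measurable] = assms(3) and Cm[measurable] = assms(4) and Dm[measurable] = assms(5)
  have fm: "finite_measure M" by (simp add: finite_measure_axioms)
  have Tpos: "\<And>\<omega>. \<omega> \<in> space M \<Longrightarrow> 0 < T \<omega>" using assms(6) .
  have Cpos: "\<And>\<omega>. \<omega> \<in> space M \<Longrightarrow> 0 < C \<omega>" using assms(7) .
  have DI: "\<And>\<omega>. \<omega> \<in> space M \<Longrightarrow> D \<omega> \<in> {1..d}" using assms(8) .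
  have Dnz: "\<And>\<omega>. \<omega> \<in> space M \<Longrightarrow> D \<omega> \<noteq> 0" using assms(8) by fastforce
  have Ttm[measurable]: "Ttil T C \<in> borel_measurable M" unfolding Ttil_def by measurable
  have Dtm[measurable]: "Dtil T C D \<in> measurable M (count_space UNIV)" unfolding Dtil_def by measurable
  have t0: "0 \<le> t" and tpos: "0 < prob {\<omega>\<in>space M. Ttil T C \<omega> > t}"
    using assms(11) by (auto simp: Jset_def)
  have ind_int: "integrable M (\<lambda>\<omega>. if P \<omega> then 1 else 0 :: real)" if "{\<omega>\<in>space M. P \<omega>} \<in> sets M" for P
    by (rule intb[OF fm, where c=1]) (use that in \<open>auto simp: measurable_If_set\<close>)

  define S where "S s = prob {\<omega>\<in>space M. T \<omega> > s}" for s
  define St where "St = prob {\<omega>\<in>space M. T \<omega> \<ge> t}"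
  have SfunS: "Sfun M T = S" by (auto simp: Sfun_def S_def)
  have Sl: "leftlim (Sfun M T) t = St"
    unfolding St_def SfunS using leftlim_surv[OF assms(1) Tm, of t] by (simp add: S_def[abs_def])
  have St_pos: "0 < St"
  proof -
    have "prob {\<omega>\<in>space M. Ttil T C \<omega> > t} \<le> St"
      unfolding St_def by (rule finite_measure_mono) (auto simp: Ttil_def)
    then show ?thesis using tpos by linarith
  qed
  have S_ge: "St \<le> S s" if "s < t" for s
    unfolding St_def S_def using that by (intro finite_measure_mono) auto
  have Sm[measurable]: "S \<in> borel_measurable borel"
    by (rule antimono_meas) (auto simp: antimono_def S_def intro!: finite_measure_mono)

  define B where "B = Bfun M T C D"
  define g where "g s \<omega> = (if C \<omega> < T \<omega> \<and> C \<omega> < s then 1 / S (C \<omega>) else 0)" for s \<omega>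
  have gm[measurable]: "case_prod g \<in> borel_measurable (borel \<Otimes>\<^sub>M M)" unfolding g_def by measurable
  have gm1[measurable]: "g s \<in> borel_measurable M" for s unfolding g_def by measurable
  have B_rep: "B s = (\<integral>\<omega>. g s \<omega> \<partial>M)" for s
  proof -
    have "B s = (\<integral>\<omega>. (if Dtil T C D \<omega> = 0 \<and> Ttil T C \<omega> \<in> {0<..<s} then 1 / S (Ttil T C \<omega>) else 0) \<partial>M)"
      unfolding B_def Bfun_def Ftilmeas_def SfunS by (rule subdistr_LINT) auto
    also have "\<dots> = (\<integral>\<omega>. g s \<omega> \<partial>M)"
      by (rule Bochner_Integration.integral_cong[OF refl])
        (auto simp: g_def Dtil_def Ttil_def dest: Dnz Cpos)
    finally show ?thesis .
  qed
  have Bm[measurable]: "B \<in> borel_measurable borel"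
  proof -
    have "(\<lambda>s. \<integral>\<omega>. g s \<omega> \<partial>M) \<in> borel_measurable borel"
      by (rule borel_measurable_lebesgue_integral) (rule gm)
    then show ?thesis by (simp add: B_rep[abs_def])
  qed
  have g_bnd: "0 \<le> g s \<omega> \<and> g s \<omega> \<le> 1 / St" if "s \<le> t" for s \<omega>
  proof (cases "C \<omega> < T \<omega> \<and> C \<omega> < s")
    case True
    then have "St \<le> S (C \<omega>)" using that by (intro S_ge) auto
    then show ?thesis using True St_pos by (auto simp: g_def intro!: divide_left_mono)
  qed (auto simp: g_def St_pos less_imp_le)
  have B_bnd: "0 \<le> B s \<and> B s \<le> 1 / St" if "s \<le> t" for s
    unfolding B_rep by (rule int_bounds[OF assms(1) gm1]) (use g_bnd that in auto)

  have part1: "Bfun M T C D t =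
           \<P>(\<omega> in M. Ttil T C \<omega> < t \<bar> T \<omega> \<ge> t)
           + 1 / leftlim (Sfun M T) t *
             (\<Sum>j=1..d. LINT s:{0<..<t}|Fmeas M T D j. 1 - a j s - Bfun M T C D s)"
  proof -
    define F where "F j = Fmeas M T D j" for j
    have Ffin: "finite_measure (F j)" for j
      unfolding F_def Fmeas_def by (rule subdistr_finite[OF fm Tm]) measurable
    have sF: "sets (F j) = sets borel" for j by (simp add: F_def Fmeas_def subdistr_def)
    have mF: "f \<in> borel_measurable (F j)" if "f \<in> borel_measurable borel" for f :: "real \<Rightarrow> real" and j
      using that measurable_cong_sets[OF sF[of j] refl, of borel] by blast
    define A :: "real set" where "A = {0<..<t}"
    have A: "A \<in> sets (F j)" for j by (simp add: sF A_def)
    have si_const: "set_integrable (F j) A (\<lambda>s. 1::real)" for j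
      unfolding set_integrable_def
      by (rule intb[OF Ffin, where c=1]) (auto intro!: mF simp: A_def indicator_def)
    have si_a: "set_integrable (F j) A (a j)" if "j \<in> {1..d}" for j
      unfolding set_integrable_def
      by (rule integrable_mult_indicator[OF A]) (use assms(9)[OF that] in \<open>auto simp: is_a_fun_def F_def\<close>)
    have si_B: "set_integrable (F j) A B" for j
      unfolding set_integrable_def
    proof (rule intb[OF Ffin, where c="1/St"])
      show "(\<lambda>x. indicat_real A x *\<^sub>R B x) \<in> borel_measurable (F j)" by (rule mF) (simp add: A_def)
      fix s show "\<bar>indicat_real A s *\<^sub>R B s\<bar> \<le> 1 / St"
        using B_bnd[of s] St_pos by (auto simp: A_def indicator_def)
    qed
    have split: "(LINT s:A|F j. 1 - a j s - B s) = (LINT s:A|F j. (1::real)) - (LINT s:A|F j. a j s) - (LINT s:A|F j. B s)"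
      if "j \<in> {1..d}" for j
      using set_integral_diff(2)[OF set_integral_diff(1)[OF si_const si_a[OF that]] si_B]
        set_integral_diff(2)[OF si_const si_a[OF that]] by simp
    have X2: "(LINT s:A|F j. a j s) = prob {\<omega>\<in>space M. Ttil T C \<omega> = T \<omega> \<and> D \<omega> = j \<and> T \<omega> \<in> A}"
      if "j \<in> {1..d}" for j
    proof -
      have "A \<in> sets borel" by (simp add: A_def)
      have "\<forall>A'\<in>sets borel. prob {\<omega>\<in>space M. Ttil T C \<omega> = T \<omega> \<and> D \<omega> = j \<and> T \<omega> \<in> A'} = (LINT s:A'|Fmeas M T D j. a j s)"
        using assms(9)[OF that] unfolding is_a_fun_def by blast
      then have "prob {\<omega>\<in>space M. Ttil T C \<omega> = T \<omega> \<and> D \<omega> = j \<and> T \<omega> \<in> A} = (LINT s:A|Fmeas M T D j. a j s)"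
        using \<open>A \<in> sets borel\<close> by (rule bspec)
      then show ?thesis by (simp add: F_def)
    qed
    have sum1: "(\<Sum>j=1..d. LINT s:A|F j. (1::real)) = (\<integral>\<omega>. (if T \<omega> < t then 1 else 0) \<partial>M)"
    proof -
      have "(\<Sum>j=1..d. LINT s:A|F j. (1::real)) = (\<integral>\<omega>. (if D \<omega> \<in> {1..d} \<and> T \<omega> \<in> A then 1 else 0) \<partial>M)"
        unfolding F_def Fmeas_def using sumSub[OF assms(1) Tm Dm, where c=1 and f="\<lambda>_. 1" and A=A and I="{1..d}"] by (simp add: A_def)
      also have "\<dots> = (\<integral>\<omega>. (if T \<omega> < t then 1 else 0) \<partial>M)"
        by (rule Bochner_Integration.integral_cong[OF refl]) (auto simp: A_def dest: DI Tpos)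
      finally show ?thesis .
    qed
    have sum3: "(\<Sum>j=1..d. LINT s:A|F j. B s) = (\<integral>\<omega>. (if T \<omega> < t then B (T \<omega>) else 0) \<partial>M)"
    proof -
      have "(\<Sum>j=1..d. LINT s:A|F j. B s) = (\<integral>\<omega>. (if D \<omega> \<in> {1..d} \<and> T \<omega> \<in> A then B (T \<omega>) else 0) \<partial>M)"
        unfolding F_def Fmeas_def
        using sumSub[OF assms(1) Tm Dm, where c="1/St" and f=B and A=A and I="{1..d}"] B_bnd St_pos by (simp add: A_def)
      also have "\<dots> = (\<integral>\<omega>. (if T \<omega> < t then B (T \<omega>) else 0) \<partial>M)"
        by (rule Bochner_Integration.integral_cong[OF refl]) (auto simp: A_def dest: DI Tpos)
      finally show ?thesis .
    qed
    have sum2: "(\<Sum>j=1..d. LINT s:A|F j. a j s) = prob {\<omega>\<in>space M. T \<omega> \<le> C \<omega> \<and> T \<omega> < t}"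
    proof -
      have "(\<Sum>j=1..d. LINT s:A|F j. a j s) = (\<Sum>j=1..d. prob {\<omega>\<in>space M. Ttil T C \<omega> = T \<omega> \<and> D \<omega> = j \<and> T \<omega> \<in> A})"
        by (rule sum.cong[OF refl]) (rule X2)
      also have "\<dots> = prob (\<Union>j\<in>{1..d}. {\<omega>\<in>space M. Ttil T C \<omega> = T \<omega> \<and> D \<omega> = j \<and> T \<omega> \<in> A})"
        by (rule finite_measure_finite_Union[symmetric]) (auto simp: disjoint_family_on_def A_def)
      also have "(\<Union>j\<in>{1..d}. {\<omega>\<in>space M. Ttil T C \<omega> = T \<omega> \<and> D \<omega> = j \<and> T \<omega> \<in> A}) = {\<omega>\<in>space M. T \<omega> \<le> C \<omega> \<and> T \<omega> < t}"
        using DI Tpos by (auto simp: A_def Ttil_def min_def)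
      finally show ?thesis .
    qed
    define h where "h \<omega> \<omega>' = (if T \<omega> < t \<and> C \<omega>' < T \<omega>' \<and> C \<omega>' < T \<omega> then 1 / S (C \<omega>') else 0)" for \<omega> \<omega>'
    have P3a: "(\<integral>\<omega>. (if T \<omega> < t then B (T \<omega>) else 0) \<partial>M) = (\<integral>\<omega>. (\<integral>\<omega>'. h \<omega> \<omega>' \<partial>M) \<partial>M)"
    proof (rule Bochner_Integration.integral_cong[OF refl])
      fix \<omega> show "(if T \<omega> < t then B (T \<omega>) else 0) = (\<integral>\<omega>'. h \<omega> \<omega>' \<partial>M)"
        by (cases "T \<omega> < t") (auto simp: B_rep g_def h_def)
    qed
    interpret PP: pair_prob_space M M by unfold_locales
    have hint: "integrable (M \<Otimes>\<^sub>M M) (\<lambda>(\<omega>', \<omega>). h \<omega> \<omega>')"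
    proof (rule intb[where c="1/St"])
      show "finite_measure (M \<Otimes>\<^sub>M M)" using prob_space_pair[OF assms(1) assms(1)] by (simp add: prob_space_def)
      show "(\<lambda>(\<omega>', \<omega>). h \<omega> \<omega>') \<in> borel_measurable (M \<Otimes>\<^sub>M M)" unfolding h_def by measurable
      fix x :: "'a \<times> 'a"
      obtain \<omega>' \<omega> where x: "x = (\<omega>', \<omega>)" by (cases x)
      show "\<bar>(case x of (\<omega>', \<omega>) \<Rightarrow> h \<omega> \<omega>')\<bar> \<le> 1 / St"
      proof (cases "T \<omega> < t \<and> C \<omega>' < T \<omega>' \<and> C \<omega>' < T \<omega>")
        case True
        then have "St \<le> S (C \<omega>')" by (intro S_ge) auto
        then show ?thesis using True St_pos by (auto simp: x h_def intro!: divide_left_mono)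
      qed (auto simp: x h_def St_pos less_imp_le)
    qed
    have Fub: "(\<integral>\<omega>. (\<integral>\<omega>'. h \<omega> \<omega>' \<partial>M) \<partial>M) = (\<integral>\<omega>'. (\<integral>\<omega>. h \<omega> \<omega>' \<partial>M) \<partial>M)"
      by (rule PP.Fubini_integral[OF hint])
    have inner: "(\<integral>\<omega>. h \<omega> \<omega>' \<partial>M) = (if C \<omega>' < T \<omega>' \<and> C \<omega>' < t then 1 else 0) - St * g t \<omega>'" for \<omega>'
    proof (cases "C \<omega>' < T \<omega>' \<and> C \<omega>' < t")
      case True
      define c where "c = C \<omega>'"
      have ct: "c < t" using True c_def by simp
      have Sc: "0 < S c" using S_ge[OF ct] St_pos by linarith
      have "(\<integral>\<omega>. h \<omega> \<omega>' \<partial>M) = (\<integral>\<omega>. 1 / S c * (if c < T \<omega> \<and> T \<omega> < t then 1 else 0) \<partial>M)"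
        by (rule Bochner_Integration.integral_cong[OF refl]) (use True in \<open>auto simp: h_def c_def\<close>)
      also have "\<dots> = 1 / S c * prob {\<omega>\<in>space M. c < T \<omega> \<and> T \<omega> < t}"
        by (subst prob_int[OF _ fm]) auto
      also have "prob {\<omega>\<in>space M. c < T \<omega> \<and> T \<omega> < t} = S c - St"
      proof -
        have "{\<omega>\<in>space M. T \<omega> > c} = {\<omega>\<in>space M. c < T \<omega> \<and> T \<omega> < t} \<union> {\<omega>\<in>space M. T \<omega> \<ge> t}"
          using ct by auto
        then have "S c = prob ({\<omega>\<in>space M. c < T \<omega> \<and> T \<omega> < t} \<union> {\<omega>\<in>space M. T \<omega> \<ge> t})"
          unfolding S_def by simp
        also have "\<dots> = prob {\<omega>\<in>space M. c < T \<omega> \<and> T \<omega> < t} + St"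
          unfolding St_def by (rule finite_measure_Union) auto
        finally have "S c = prob {\<omega>\<in>space M. c < T \<omega> \<and> T \<omega> < t} + St" .
        then show ?thesis by simp
      qed
      finally show ?thesis using True Sc by (simp add: g_def c_def field_simps)
    next
      case False
      have "(\<integral>\<omega>. h \<omega> \<omega>' \<partial>M) = (\<integral>\<omega>. 0 \<partial>M)"
        by (rule Bochner_Integration.integral_cong[OF refl]) (use False in \<open>auto simp: h_def\<close>)
      moreover have "g t \<omega>' = 0" using False by (auto simp: g_def)
      ultimately show ?thesis using False by simp
    qed
    have P3: "(\<integral>\<omega>. (if T \<omega> < t then B (T \<omega>) else 0) \<partial>M)
        = (\<integral>\<omega>. (if C \<omega> < T \<omega> \<and> C \<omega> < t then 1 else 0) \<partial>M) - St * B t"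
    proof -
      have gi: "integrable M (\<lambda>\<omega>. St * g t \<omega>)"
      proof (rule intb[OF fm, where c=1])
        show "(\<lambda>\<omega>. St * g t \<omega>) \<in> borel_measurable M" by measurable
        fix \<omega>
        have g0: "0 \<le> g t \<omega>" and g1: "g t \<omega> \<le> 1/St" using g_bnd[of t \<omega>] by auto
        then have "St * g t \<omega> \<le> 1" using St_pos by (simp add: pos_le_divide_eq mult.commute)
        then show "\<bar>St * g t \<omega>\<bar> \<le> 1" using g0 St_pos by simp
      qed
      have "(\<integral>\<omega>. (if T \<omega> < t then B (T \<omega>) else 0) \<partial>M)
          = (\<integral>\<omega>'. (if C \<omega>' < T \<omega>' \<and> C \<omega>' < t then 1 else 0) - St * g t \<omega>' \<partial>M)"
        unfolding P3a Fub inner ..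
      also have "\<dots> = (\<integral>\<omega>. (if C \<omega> < T \<omega> \<and> C \<omega> < t then 1 else 0) \<partial>M) - (\<integral>\<omega>. St * g t \<omega> \<partial>M)"
        by (rule Bochner_Integration.integral_diff[OF ind_int gi]) measurable
      finally show ?thesis by (simp add: B_rep)
    qed
    define f0 where "f0 \<omega> = (if Ttil T C \<omega> < t \<and> t \<le> T \<omega> then 1 else 0::real)" for \<omega>
    define f1 where "f1 \<omega> = (if T \<omega> < t then 1 else 0::real)" for \<omega>
    define f2 where "f2 \<omega> = (if T \<omega> \<le> C \<omega> \<and> T \<omega> < t then 1 else 0::real)" for \<omega>
    define f4 where "f4 \<omega> = (if C \<omega> < T \<omega> \<and> C \<omega> < t then 1 else 0::real)" for \<omega>
    have i0: "integrable M f0" unfolding f0_def by (rule ind_int) measurable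
    have i1: "integrable M f1" unfolding f1_def by (rule ind_int) measurable
    have i2: "integrable M f2" unfolding f2_def by (rule ind_int) measurable
    have i4: "integrable M f4" unfolding f4_def by (rule ind_int) measurable
    have "(\<integral>\<omega>. f0 \<omega> + f1 \<omega> - f2 \<omega> - f4 \<omega> \<partial>M) = integral\<^sup>L M f0 + integral\<^sup>L M f1 - integral\<^sup>L M f2 - integral\<^sup>L M f4"
      using i0 i1 i2 i4 by simp
    moreover have "(\<integral>\<omega>. f0 \<omega> + f1 \<omega> - f2 \<omega> - f4 \<omega> \<partial>M) = (\<integral>\<omega>. 0 \<partial>M)"
      by (rule Bochner_Integration.integral_cong[OF refl]) (auto simp: f0_def f1_def f2_def f4_def Ttil_def)
    ultimately have iden: "integral\<^sup>L M f0 + integral\<^sup>L M f1 - integral\<^sup>L M f2 - integral\<^sup>L M f4 = 0" by simp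
    have q0: "\<P>(\<omega> in M. Ttil T C \<omega> < t \<bar> T \<omega> \<ge> t) = integral\<^sup>L M f0 / St"
      unfolding cond_prob_def St_def f0_def by (subst prob_int[OF _ fm]) auto
    have q2: "prob {\<omega>\<in>space M. T \<omega> \<le> C \<omega> \<and> T \<omega> < t} = integral\<^sup>L M f2"
      unfolding f2_def by (rule prob_int[OF _ fm]) measurable
    have "(\<Sum>j=1..d. LINT s:{0<..<t}|Fmeas M T D j. 1 - a j s - Bfun M T C D s)
        = (\<Sum>j=1..d. (LINT s:A|F j. (1::real)) - (LINT s:A|F j. a j s) - (LINT s:A|F j. B s))"
      unfolding A_def[symmetric] F_def[symmetric] B_def[symmetric] by (rule sum.cong[OF refl]) (rule split)
    also have "\<dots> = integral\<^sup>L M f1 - integral\<^sup>L M f2 - (integral\<^sup>L M f4 - St * B t)"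
      unfolding sum_subtractf sum1 sum2 sum3 P3 q2 by (simp add: f1_def[abs_def] f4_def[abs_def])
    finally have main: "(\<Sum>j=1..d. LINT s:{0<..<t}|Fmeas M T D j. 1 - a j s - Bfun M T C D s)
        = integral\<^sup>L M f1 - integral\<^sup>L M f2 - (integral\<^sup>L M f4 - St * B t)" .
    have fin: "B t = integral\<^sup>L M f0 / St + 1 / St * (integral\<^sup>L M f1 - integral\<^sup>L M f2 - (integral\<^sup>L M f4 - St * B t))"
      using iden St_pos by (simp add: field_simps)
    show ?thesis by (subst main, subst q0, subst Sl) (use fin in \<open>simp add: B_def\<close>)
  qed
  have part2: "(\<Sum>j=1..d. LINT u:{0<..t}|Ftilmeas M T C D j. 1 / leftlim (Kfun M C) u) =
           \<P>(\<omega> in M. T \<omega> \<le> t \<bar> C \<omega> \<ge> t)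
           + 1 / leftlim (Kfun M C) t *
             (LINT s:{0<..<t}|Gmeas M C.
                1 - measure (\<kappa> s) {\<omega>\<in>space M. Ttil T C \<omega> = s \<and> Dtil T C D \<omega> = 0}
                  - (\<Sum>j=1..d. LINT u:{0<..s}|Ftilmeas M T C D j. 1 / leftlim (Kfun M C) u))"
  proof -
    define Kl where "Kl u = prob {\<omega>\<in>space M. C \<omega> \<ge> u}" for u
    have KL: "leftlim (Kfun M C) = Kl"
    proof
      fix u
      have "Kfun M C = (\<lambda>s. \<P>(\<omega> in M. C \<omega> > s))" by (auto simp: Kfun_def)
      then show "leftlim (Kfun M C) u = Kl u" using leftlim_surv[OF assms(1) Cm, of u] by (simp add: Kl_def)
    qed
    define Kt where "Kt = Kl t"
    have Kt_pos: "0 < Kt"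
    proof -
      have "prob {\<omega>\<in>space M. Ttil T C \<omega> > t} \<le> Kt"
        unfolding Kt_def Kl_def by (rule finite_measure_mono) (auto simp: Ttil_def)
      then show ?thesis using tpos by linarith
    qed
    have Kl_ge: "Kt \<le> Kl u" if "u \<le> t" for u
      unfolding Kt_def Kl_def using that by (intro finite_measure_mono) auto
    have Klm[measurable]: "Kl \<in> borel_measurable borel"
      by (rule antimono_meas) (auto simp: antimono_def Kl_def intro!: finite_measure_mono)
    define k where "k s \<omega> = (if T \<omega> \<le> C \<omega> \<and> T \<omega> \<le> s then 1 / Kl (T \<omega>) else 0)" for s \<omega>
    have km[measurable]: "case_prod k \<in> borel_measurable (borel \<Otimes>\<^sub>M M)" unfolding k_def by measurable
    have km1[measurable]: "k s \<in> borel_measurable M" for s unfolding k_def by measurable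
    define H' where "H' s = (\<integral>\<omega>. k s \<omega> \<partial>M)" for s
    have H'm[measurable]: "H' \<in> borel_measurable borel"
      unfolding H'_def[abs_def] by (rule borel_measurable_lebesgue_integral) (rule km)
    have k_bnd: "0 \<le> k s \<omega> \<and> k s \<omega> \<le> 1 / Kt" if "s \<le> t" for s \<omega>
    proof (cases "T \<omega> \<le> C \<omega> \<and> T \<omega> \<le> s")
      case True
      then have "Kt \<le> Kl (T \<omega>)" using that by (intro Kl_ge) auto
      then show ?thesis using True Kt_pos by (auto simp: k_def intro!: divide_left_mono)
    qed (auto simp: k_def Kt_pos less_imp_le)
    have H'_bnd: "0 \<le> H' s \<and> H' s \<le> 1 / Kt" if "s \<le> t" for s
      unfolding H'_def by (rule int_bounds[OF assms(1) km1]) (use k_bnd that in auto)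
    have H_rep: "(\<Sum>j=1..d. LINT u:{0<..s}|Ftilmeas M T C D j. 1 / Kl u) = H' s" if "s \<le> t" for s
    proof -
      have Ab: "{0<..s} \<in> sets (borel :: real measure)" by simp
      have "(\<Sum>j=1..d. LINT u:{0<..s}|Ftilmeas M T C D j. 1 / Kl u)
          = (\<integral>\<omega>. (if Dtil T C D \<omega> \<in> {1..d} \<and> Ttil T C \<omega> \<in> {0<..s} then 1 / Kl (Ttil T C \<omega>) else 0) \<partial>M)"
        unfolding Ftilmeas_def
      proof (rule sumSub[OF assms(1) Ttm Dtm _ Ab, where c="1/Kt"])
        fix u :: real assume "u \<in> {0<..s}"
        then have "Kt \<le> Kl u" using that by (intro Kl_ge) auto
        then show "\<bar>1 / Kl u\<bar> \<le> 1 / Kt" using Kt_pos by (auto intro!: divide_left_mono)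
      qed auto
      also have "\<dots> = H' s"
        unfolding H'_def
        by (rule Bochner_Integration.integral_cong[OF refl])
          (auto simp: k_def Dtil_def Ttil_def dest: DI Tpos)
      finally show ?thesis .
    qed
    have ps: "\<And>s. prob_space (\<kappa> s)" using assms(10) unfolding is_rcp_def by blast
    define G where "G = Gmeas M C"
    have PG: "prob_space G" unfolding G_def Gmeas_def by (rule prob_space_distr) simp
    have fG: "finite_measure G" using PG by (simp add: prob_space_def)
    have sG: "sets G = sets borel" by (simp add: G_def Gmeas_def)
    have mG: "f \<in> borel_measurable G" if "f \<in> borel_measurable borel" for f :: "real \<Rightarrow> real"
      using that measurable_cong_sets[OF sG refl, of borel] by blast
    define A :: "real set" where "A = {0<..<t}"
    have AG: "A \<in> sets G" by (simp add: sG A_def)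
    define kap where "kap s = measure (\<kappa> s) {\<omega>\<in>space M. Ttil T C \<omega> = s \<and> Dtil T C D \<omega> = 0}" for s
    define \<Gamma>0 where "\<Gamma>0 = {x\<in>space (M \<Otimes>\<^sub>M (borel :: real measure)). C (fst x) = snd x \<and> snd x < T (fst x)}"
    have \<Gamma>0: "\<Gamma>0 \<in> sets (M \<Otimes>\<^sub>M borel)" unfolding \<Gamma>0_def by measurable
    have kap_eq: "kap s = measure (\<kappa> s) {\<omega>\<in>space M. (\<omega>, s) \<in> \<Gamma>0}" for s
      unfolding kap_def \<Gamma>0_def
      by (rule arg_cong[where f="measure (\<kappa> s)"]) (auto simp: Ttil_def Dtil_def space_pair_measure dest: Dnz)
    have kapm[measurable]: "kap \<in> borel_measurable borel"
      unfolding kap_eq[abs_def] by (rule rcp_diag(1)[OF assms(1) assms(10) Cm \<Gamma>0])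
    have kap_bnd: "0 \<le> kap s \<and> kap s \<le> 1" for s
      unfolding kap_def using prob_space.prob_le_1[OF ps] by auto
    define \<Gamma>1 where "\<Gamma>1 = {x\<in>space (M \<Otimes>\<^sub>M (borel :: real measure)). C (fst x) = snd x \<and> snd x < T (fst x) \<and> 0 < snd x \<and> snd x < t}"
    have \<Gamma>1: "\<Gamma>1 \<in> sets (M \<Otimes>\<^sub>M borel)" unfolding \<Gamma>1_def by measurable
    have Ikap: "(LINT s:A|G. kap s) = prob {\<omega>\<in>space M. C \<omega> < T \<omega> \<and> C \<omega> < t}"
    proof -
      have "(LINT s:A|G. kap s) = (\<integral>s. measure (\<kappa> s) {\<omega>\<in>space M. (\<omega>, s) \<in> \<Gamma>1} \<partial>distr M borel C)"
        unfolding set_lebesgue_integral_def G_def Gmeas_def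
      proof (rule Bochner_Integration.integral_cong[OF refl])
        fix s
        show "indicator A s *\<^sub>R kap s = measure (\<kappa> s) {\<omega>\<in>space M. (\<omega>, s) \<in> \<Gamma>1}"
          unfolding kap_eq \<Gamma>0_def \<Gamma>1_def
          by (cases "s \<in> A") (auto simp: A_def space_pair_measure intro!: arg_cong[where f="measure (\<kappa> s)"])
      qed
      also have "\<dots> = prob {\<omega>\<in>space M. (\<omega>, C \<omega>) \<in> \<Gamma>1}"
        by (rule rcp_diag(2)[OF assms(1) assms(10) Cm \<Gamma>1])
      also have "{\<omega>\<in>space M. (\<omega>, C \<omega>) \<in> \<Gamma>1} = {\<omega>\<in>space M. C \<omega> < T \<omega> \<and> C \<omega> < t}"
        unfolding \<Gamma>1_def by (auto simp: space_pair_measure dest: Cpos)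
      finally show ?thesis .
    qed
    have I1: "(LINT s:A|G. (1::real)) = (\<integral>\<omega>. (if C \<omega> < t then 1 else 0) \<partial>M)"
    proof -
      have "(LINT s:A|G. (1::real)) = (\<integral>\<omega>. (if C \<omega> \<in> A then 1 else 0) \<partial>M)"
        unfolding G_def Gmeas_def by (rule distr_LINT) (auto simp: A_def)
      also have "\<dots> = (\<integral>\<omega>. (if C \<omega> < t then 1 else 0) \<partial>M)"
        by (rule Bochner_Integration.integral_cong[OF refl]) (auto simp: A_def dest: Cpos)
      finally show ?thesis .
    qed
    define h where "h \<omega> \<omega>' = (if C \<omega> < t \<and> T \<omega>' \<le> C \<omega>' \<and> T \<omega>' \<le> C \<omega> then 1 / Kl (T \<omega>') else 0)" for \<omega> \<omega>'
    have IH1: "(LINT s:A|G. H' s) = (\<integral>\<omega>. (\<integral>\<omega>'. h \<omega> \<omega>' \<partial>M) \<partial>M)"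
    proof -
      have "(LINT s:A|G. H' s) = (\<integral>\<omega>. (if C \<omega> \<in> A then H' (C \<omega>) else 0) \<partial>M)"
        unfolding G_def Gmeas_def by (rule distr_LINT) (auto simp: A_def)
      also have "\<dots> = (\<integral>\<omega>. (\<integral>\<omega>'. h \<omega> \<omega>' \<partial>M) \<partial>M)"
      proof (rule Bochner_Integration.integral_cong[OF refl])
        fix \<omega> assume "\<omega> \<in> space M"
        then have "0 < C \<omega>" by (rule Cpos)
        then show "(if C \<omega> \<in> A then H' (C \<omega>) else 0) = (\<integral>\<omega>'. h \<omega> \<omega>' \<partial>M)"
          by (cases "C \<omega> < t") (auto simp: A_def H'_def k_def h_def)
      qed
      finally show ?thesis .
    qed
    interpret PP: pair_prob_space M M by unfold_locales
    have hint: "integrable (M \<Otimes>\<^sub>M M) (\<lambda>(\<omega>', \<omega>). h \<omega> \<omega>')"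
    proof (rule intb[where c="1/Kt"])
      show "finite_measure (M \<Otimes>\<^sub>M M)" using prob_space_pair[OF assms(1) assms(1)] by (simp add: prob_space_def)
      show "(\<lambda>(\<omega>', \<omega>). h \<omega> \<omega>') \<in> borel_measurable (M \<Otimes>\<^sub>M M)" unfolding h_def by measurable
      fix x :: "'a \<times> 'a"
      obtain \<omega>' \<omega> where x: "x = (\<omega>', \<omega>)" by (cases x)
      show "\<bar>(case x of (\<omega>', \<omega>) \<Rightarrow> h \<omega> \<omega>')\<bar> \<le> 1 / Kt"
      proof (cases "C \<omega> < t \<and> T \<omega>' \<le> C \<omega>' \<and> T \<omega>' \<le> C \<omega>")
        case True
        then have "Kt \<le> Kl (T \<omega>')" by (intro Kl_ge) auto
        then show ?thesis using True Kt_pos by (auto simp: x h_def intro!: divide_left_mono)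
      qed (auto simp: x h_def Kt_pos less_imp_le)
    qed
    have Fub: "(\<integral>\<omega>. (\<integral>\<omega>'. h \<omega> \<omega>' \<partial>M) \<partial>M) = (\<integral>\<omega>'. (\<integral>\<omega>. h \<omega> \<omega>' \<partial>M) \<partial>M)"
      by (rule PP.Fubini_integral[OF hint])
    have inner: "(\<integral>\<omega>. h \<omega> \<omega>' \<partial>M) = (if T \<omega>' \<le> C \<omega>' \<and> T \<omega>' \<le> t then 1 else 0) - Kt * k t \<omega>'" for \<omega>'
    proof (cases "T \<omega>' \<le> C \<omega>' \<and> T \<omega>' \<le> t")
      case True
      define c where "c = T \<omega>'"
      have ct: "c \<le> t" using True c_def by simp
      have Kc: "0 < Kl c" using Kl_ge[OF ct] Kt_pos by linarith
      have "(\<integral>\<omega>. h \<omega> \<omega>' \<partial>M) = (\<integral>\<omega>. 1 / Kl c * (if c \<le> C \<omega> \<and> C \<omega> < t then 1 else 0) \<partial>M)"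
        by (rule Bochner_Integration.integral_cong[OF refl]) (use True in \<open>auto simp: h_def c_def\<close>)
      also have "\<dots> = 1 / Kl c * prob {\<omega>\<in>space M. c \<le> C \<omega> \<and> C \<omega> < t}"
        by (subst prob_int[OF _ fm]) auto
      also have "prob {\<omega>\<in>space M. c \<le> C \<omega> \<and> C \<omega> < t} = Kl c - Kt"
      proof -
        have "{\<omega>\<in>space M. C \<omega> \<ge> c} = {\<omega>\<in>space M. c \<le> C \<omega> \<and> C \<omega> < t} \<union> {\<omega>\<in>space M. C \<omega> \<ge> t}"
          using ct by auto
        then have "Kl c = prob ({\<omega>\<in>space M. c \<le> C \<omega> \<and> C \<omega> < t} \<union> {\<omega>\<in>space M. C \<omega> \<ge> t})"
          unfolding Kl_def by simp
        also have "\<dots> = prob {\<omega>\<in>space M. c \<le> C \<omega> \<and> C \<omega> < t} + Kt"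
          unfolding Kt_def Kl_def by (rule finite_measure_Union) auto
        finally show ?thesis by simp
      qed
      finally show ?thesis using True Kc by (simp add: k_def c_def field_simps)
    next
      case False
      have "(\<integral>\<omega>. h \<omega> \<omega>' \<partial>M) = (\<integral>\<omega>. 0 \<partial>M)"
        by (rule Bochner_Integration.integral_cong[OF refl]) (use False in \<open>auto simp: h_def\<close>)
      moreover have "k t \<omega>' = 0" using False by (auto simp: k_def)
      ultimately show ?thesis using False by simp
    qed
    have IH: "(LINT s:A|G. H' s) = (\<integral>\<omega>. (if T \<omega> \<le> C \<omega> \<and> T \<omega> \<le> t then 1 else 0) \<partial>M) - Kt * H' t"
    proof -
      have ki: "integrable M (\<lambda>\<omega>. Kt * k t \<omega>)"
      proof (rule intb[OF fm, where c=1])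
        show "(\<lambda>\<omega>. Kt * k t \<omega>) \<in> borel_measurable M" by measurable
        fix \<omega>
        have k0: "0 \<le> k t \<omega>" and k1: "k t \<omega> \<le> 1/Kt" using k_bnd[of t \<omega>] by auto
        then have "Kt * k t \<omega> \<le> 1" using Kt_pos by (simp add: pos_le_divide_eq mult.commute)
        then show "\<bar>Kt * k t \<omega>\<bar> \<le> 1" using k0 Kt_pos by simp
      qed
      have "(LINT s:A|G. H' s) = (\<integral>\<omega>'. (if T \<omega>' \<le> C \<omega>' \<and> T \<omega>' \<le> t then 1 else 0) - Kt * k t \<omega>' \<partial>M)"
        unfolding IH1 Fub inner ..
      also have "\<dots> = (\<integral>\<omega>. (if T \<omega> \<le> C \<omega> \<and> T \<omega> \<le> t then 1 else 0) \<partial>M) - (\<integral>\<omega>. Kt * k t \<omega> \<partial>M)"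
        by (rule Bochner_Integration.integral_diff[OF ind_int ki]) measurable
      finally show ?thesis by (simp add: H'_def)
    qed
    have si1: "set_integrable G A (\<lambda>s. 1::real)"
      unfolding set_integrable_def
      by (rule intb[OF fG, where c=1]) (auto intro!: mG simp: A_def indicator_def)
    have sikap: "set_integrable G A kap"
      unfolding set_integrable_def
      by (rule intb[OF fG, where c=1]) (use kap_bnd in \<open>auto intro!: mG simp: A_def indicator_def\<close>)
    have siH: "set_integrable G A H'"
      unfolding set_integrable_def
    proof (rule intb[OF fG, where c="1/Kt"])
      show "(\<lambda>x. indicat_real A x *\<^sub>R H' x) \<in> borel_measurable G" by (rule mG) (simp add: A_def)
      fix s show "\<bar>indicat_real A s *\<^sub>R H' s\<bar> \<le> 1 / Kt"
        using H'_bnd[of s] Kt_pos by (auto simp: A_def indicator_def)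
    qed
    have split: "(LINT s:A|G. 1 - kap s - H' s) = (LINT s:A|G. (1::real)) - (LINT s:A|G. kap s) - (LINT s:A|G. H' s)"
      using set_integral_diff(2)[OF set_integral_diff(1)[OF si1 sikap] siH]
        set_integral_diff(2)[OF si1 sikap] by simp
    have cong: "(LINT s:{0<..<t}|Gmeas M C. 1 - kap s - (\<Sum>j=1..d. LINT u:{0<..s}|Ftilmeas M T C D j. 1 / Kl u))
        = (LINT s:A|G. 1 - kap s - H' s)"
      unfolding A_def G_def
    proof (rule set_lebesgue_integral_cong)
      show "{0<..<t} \<in> sets (Gmeas M C)" by (simp add: Gmeas_def)
      show "\<forall>s. s \<in> {0<..<t} \<longrightarrow> 1 - kap s - (\<Sum>j=1..d. LINT u:{0<..s}|Ftilmeas M T C D j. 1 / Kl u) = 1 - kap s - H' s"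
      proof (intro allI impI)
        fix s :: real assume "s \<in> {0<..<t}"
        then have "s \<le> t" by auto
        from H_rep[OF this] show "1 - kap s - (\<Sum>j=1..d. LINT u:{0<..s}|Ftilmeas M T C D j. 1 / Kl u) = 1 - kap s - H' s"
          by simp
      qed
    qed
    define e0 where "e0 \<omega> = (if T \<omega> \<le> t \<and> t \<le> C \<omega> then 1 else 0::real)" for \<omega>
    define e1 where "e1 \<omega> = (if C \<omega> < t then 1 else 0::real)" for \<omega>
    define e2 where "e2 \<omega> = (if C \<omega> < T \<omega> \<and> C \<omega> < t then 1 else 0::real)" for \<omega>
    define e3 where "e3 \<omega> = (if T \<omega> \<le> C \<omega> \<and> T \<omega> \<le> t then 1 else 0::real)" for \<omega>
    have i0: "integrable M e0" unfolding e0_def by (rule ind_int) measurable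
    have i1: "integrable M e1" unfolding e1_def by (rule ind_int) measurable
    have i2: "integrable M e2" unfolding e2_def by (rule ind_int) measurable
    have i3: "integrable M e3" unfolding e3_def by (rule ind_int) measurable
    have "(\<integral>\<omega>. e0 \<omega> + e1 \<omega> - e2 \<omega> - e3 \<omega> \<partial>M) = integral\<^sup>L M e0 + integral\<^sup>L M e1 - integral\<^sup>L M e2 - integral\<^sup>L M e3"
      using i0 i1 i2 i3 by simp
    moreover have "(\<integral>\<omega>. e0 \<omega> + e1 \<omega> - e2 \<omega> - e3 \<omega> \<partial>M) = (\<integral>\<omega>. 0 \<partial>M)"
      by (rule Bochner_Integration.integral_cong[OF refl]) (auto simp: e0_def e1_def e2_def e3_def)
    ultimately have iden: "integral\<^sup>L M e0 + integral\<^sup>L M e1 - integral\<^sup>L M e2 - integral\<^sup>L M e3 = 0" by simp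
    have q0: "\<P>(\<omega> in M. T \<omega> \<le> t \<bar> C \<omega> \<ge> t) = integral\<^sup>L M e0 / Kt"
      unfolding cond_prob_def Kt_def Kl_def e0_def by (subst prob_int[OF _ fm]) auto
    have q2: "prob {\<omega>\<in>space M. C \<omega> < T \<omega> \<and> C \<omega> < t} = integral\<^sup>L M e2"
      unfolding e2_def by (rule prob_int[OF _ fm]) measurable
    have main: "(LINT s:{0<..<t}|Gmeas M C. 1 - kap s - (\<Sum>j=1..d. LINT u:{0<..s}|Ftilmeas M T C D j. 1 / Kl u))
        = integral\<^sup>L M e1 - integral\<^sup>L M e2 - (integral\<^sup>L M e3 - Kt * H' t)"
      unfolding cong split I1 Ikap IH q2 by (simp add: e1_def[abs_def] e3_def[abs_def])
    have fin: "H' t = integral\<^sup>L M e0 / Kt + 1 / Kt * (integral\<^sup>L M e1 - integral\<^sup>L M e2 - (integral\<^sup>L M e3 - Kt * H' t))"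
      using iden Kt_pos by (simp add: field_simps)
    show ?thesis
      unfolding KL kap_def[symmetric] main q0 H_rep[OF order_refl]
      using fin by (simp add: Kt_def)
  qed
  show ?thesis using part1 part2 by blast
qed

end
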